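(* Let $G=(V,E)$ be a finite, simple, undirected, unweighted graph, let $h$ be a positive integer, let $v\in V$, let $u\in N_v^h(G)$ and put $s=dis_G(u,v)$. Then for every $w\in N_v^{h-s}(G)$, $$dis_{G(V\setminus\{v\})}(u,w)\le h \iff dis_{G(N_v^h(G))}(u,w)\le h .$$ Consequently, with $F_u=\{w\in N_v^{h-s}(G): dis_{G(V\setminus\{v\})}(u,w)>h\}$, one has $F_u=\{w\in N_v^{h-s}(G): dis_{G(N_v^h(G))}(u,w)>h\}$ and $$d_u^h\big(G(V\setminus\{v\})\big)=d_u^h(G)-1-\big|\{w\in N_v^{h-s}(G): dis_{G(N_v^h(G))}(u,w)>h\}\big|.$$
   Context: For a graph $H$ and vertices $x,y$ of $H$, $dis_H(x,y)$ denotes the shortest-path distance between $x$ and $y$ in $H$ (equal to $+\infty$ if no path exists). For a nonnegative integer $t$, the $t$-hop neighborhood of a vertex $x$ in $H=(V_H,E_H)$ is $N_x^t(H)=\{y\in V_H : y\neq x,\ dis_H(x,y)\le t\}$, and the $t$-hop degree is $d_x^t(H)=|N_x^t(H)|$. For $S\subseteq V$, $G(S)$ denotes the subgraph of $G$ induced by $S$. *)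

theory Defs
  imports Main "HOL-Library.Extended_Nat"
begin

definition simple_graph :: "'a set \<Rightarrow> ('a \<Rightarrow> 'a \<Rightarrow> bool) \<Rightarrow> bool" where
  "simple_graph V E \<longleftrightarrow> finite V \<and> (\<forall>x y. E x y \<longrightarrow> x \<in> V \<and> y \<in> V)
     \<and> (\<forall>x y. E x y \<longrightarrow> E y x) \<and> (\<forall>x. \<not> E x x)"

definition is_walk :: "('a \<Rightarrow> 'a \<Rightarrow> bool) \<Rightarrow> 'a set \<Rightarrow> 'a \<Rightarrow> 'a \<Rightarrow> 'a list \<Rightarrow> bool" where
  "is_walk E S x y p \<longleftrightarrow> p \<noteq> [] \<and> hd p = x \<and> last p = y \<and> set p \<subseteq> S
     \<and> (\<forall>i. Suc i < length p \<longrightarrow> E (p ! i) (p ! Suc i))"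

text \<open>Shortest-path distance in the induced subgraph G(S); infinity if no path.\<close>
definition dis :: "('a \<Rightarrow> 'a \<Rightarrow> bool) \<Rightarrow> 'a set \<Rightarrow> 'a \<Rightarrow> 'a \<Rightarrow> enat" where
  "dis E S x y = (INF p \<in> {p. is_walk E S x y p}. enat (length p - 1))"

definition nbhd :: "('a \<Rightarrow> 'a \<Rightarrow> bool) \<Rightarrow> 'a set \<Rightarrow> 'a \<Rightarrow> nat \<Rightarrow> 'a set" where
  "nbhd E S x t = {y \<in> S. y \<noteq> x \<and> dis E S x y \<le> enat t}"

definition hdeg :: "('a \<Rightarrow> 'a \<Rightarrow> bool) \<Rightarrow> 'a set \<Rightarrow> 'a \<Rightarrow> nat \<Rightarrow> nat" where
  "hdeg E S x t = card (nbhd E S x t)"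

end

theory Submission
  imports Defs
begin

lemma walk_alt: "is_walk E S x y p \<longleftrightarrow> p \<noteq> [] \<and> hd p = x \<and> last p = y \<and> set p \<subseteq> S \<and> successively E p"
  unfolding is_walk_def successively_conv_nth by simp

lemma dis_lower: "is_walk E S x y p \<Longrightarrow> dis E S x y \<le> enat (length p - 1)"
  unfolding dis_def by (rule INF_lower) simp

lemma dis_le: "dis E S x y \<le> enat n \<longleftrightarrow> (\<exists>p. is_walk E S x y p \<and> length p \<le> Suc n)"
proof
  assume a: "dis E S x y \<le> enat n"
  let ?A = "(\<lambda>p. enat (length p - 1)) ` {p. is_walk E S x y p}"
  have "?A \<noteq> {}"
  proof
    assume "?A = {}" then have "{p. is_walk E S x y p} = {}" by auto
    then have "dis E S x y = \<infinity>" unfolding dis_def by (simp only: INF_empty top_enat_def)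
    with a show False by simp
  qed
  then have "Inf ?A \<in> ?A" unfolding Inf_enat_def by (auto intro: LeastI)
  then obtain p where p: "is_walk E S x y p" "dis E S x y = enat (length p - 1)"
    unfolding dis_def by auto
  with a have "length p - 1 \<le> n" by simp
  with p show "\<exists>p. is_walk E S x y p \<and> length p \<le> Suc n" by (intro exI[of _ p]) auto
next
  assume "\<exists>p. is_walk E S x y p \<and> length p \<le> Suc n"
  then obtain p where p: "is_walk E S x y p" "length p \<le> Suc n" by auto
  have "dis E S x y \<le> enat (length p - 1)" by (rule dis_lower[OF p(1)])
  also have "\<dots> \<le> enat n" using p(2) by simp
  finally show "dis E S x y \<le> enat n" .
qed

lemma dis_leD:
  assumes "dis E S x y \<le> enat n"
  obtains p where "is_walk E S x y p" "length p \<le> Suc n"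
  using assms that unfolding dis_le by blast

lemma dis_leI: "is_walk E S x y p \<Longrightarrow> length p \<le> Suc n \<Longrightarrow> dis E S x y \<le> enat n"
  unfolding dis_le by blast

lemma walk_mono: "is_walk E S x y p \<Longrightarrow> S \<subseteq> T \<Longrightarrow> is_walk E T x y p"
  unfolding is_walk_def by auto

lemma walk_rev: "(\<forall>a b. E a b \<longrightarrow> E b a) \<Longrightarrow> is_walk E S x y p \<Longrightarrow> is_walk E S y x (rev p)"
proof -
  assume s: "\<forall>a b. E a b \<longrightarrow> E b a" and w: "is_walk E S x y p"
  have "successively (\<lambda>a b. E b a) p" using w s unfolding walk_alt
    by (auto intro: successively_mono)
  with w show ?thesis unfolding walk_alt by (auto simp: hd_rev last_rev)
qed

lemma walk_app: "is_walk E S x y p \<Longrightarrow> is_walk E S y z q \<Longrightarrow>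
   is_walk E S x z (p @ tl q) \<and> length (p @ tl q) = length p + length q - 1"
  unfolding walk_alt
  by (cases q; cases "tl q") (auto simp: successively_append_iff successively_Cons last_append)

lemma walk_split: "is_walk E S x y p \<Longrightarrow> z \<in> set p \<Longrightarrow>
   \<exists>p1 p2. is_walk E S x z p1 \<and> is_walk E S z y p2 \<and> length p1 + length p2 = Suc (length p)"
proof -
  assume w: "is_walk E S x y p" and z: "z \<in> set p"
  obtain xs ys where p: "p = xs @ z # ys" using split_list[OF z] by auto
  have "is_walk E S x z (xs @ [z])" "is_walk E S z y (z # ys)"
    using w unfolding walk_alt p
    by (auto simp: successively_append_iff successively_Cons hd_append split: if_splits)
  then show ?thesis by (intro exI[of _ "xs @ [z]"] exI[of _ "z # ys"]) (simp add: p)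
qed

lemma walk_single: "x \<in> S \<Longrightarrow> is_walk E S x x [x]"
  unfolding is_walk_def by simp

theorem mainTheorem4:
  fixes V :: "'a set" and E :: "'a \<Rightarrow> 'a \<Rightarrow> bool" and h s :: nat and u v :: 'a
  assumes "simple_graph V E"
    and "h > 0"
    and "v \<in> V"
    and "u \<in> nbhd E V v h"
    and "dis E V u v = enat s"
  shows "(\<forall>w \<in> nbhd E V v (h - s).
            dis E (V - {v}) u w \<le> enat h \<longleftrightarrow> dis E (nbhd E V v h) u w \<le> enat h)
       \<and> {w \<in> nbhd E V v (h - s). dis E (V - {v}) u w > enat h}
           = {w \<in> nbhd E V v (h - s). dis E (nbhd E V v h) u w > enat h}
       \<and> int (hdeg E (V - {v}) u h)
           = int (hdeg E V u h) - 1
             - int (card {w \<in> nbhd E V v (h - s). dis E (nbhd E V v h) u w > enat h})"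
proof -
  have sym: "\<forall>a b. E a b \<longrightarrow> E b a" and finV: "finite V"
    using assms(1) unfolding simple_graph_def by auto
  define N where "N = nbhd E V v h"
  have uV: "u \<in> V" and uv: "u \<noteq> v" using assms(4) unfolding nbhd_def by auto
  have "dis E V u v \<le> enat s" using assms(5) by simp
  then obtain q where q: "is_walk E V u v q" "length q \<le> Suc s"
    by (rule dis_leD)
  have qlow: "\<And>p. is_walk E V u v p \<Longrightarrow> Suc s \<le> length p"
  proof -
    fix p assume "is_walk E V u v p"
    from dis_lower[OF this] assms(5) have "s \<le> length p - 1" by simp
    moreover have "p \<noteq> []" using \<open>is_walk E V u v p\<close> unfolding is_walk_def by simp
    ultimately show "Suc s \<le> length p" by (cases p) auto
  qed
  have rq: "is_walk E V v u (rev q)" using walk_rev[OF sym q(1)] .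
  have sh: "s \<le> h"
  proof -
    have "dis E V v u \<le> enat h" using assms(4) unfolding nbhd_def by auto
    then obtain p where p: "is_walk E V v u p" "length p \<le> Suc h"
      by (rule dis_leD)
    from qlow[OF walk_rev[OF sym p(1)]] p(2) show ?thesis by simp
  qed
  have NV: "N \<subseteq> V - {v}" unfolding N_def nbhd_def by auto
  have key: "set p \<subseteq> N" if w: "w \<in> nbhd E V v (h - s)" and p: "is_walk E (V - {v}) u w p"
    and pl: "length p \<le> Suc h" for w p
  proof
    fix x assume x: "x \<in> set p"
    have xV: "x \<in> V" "x \<noteq> v" using p x unfolding is_walk_def by auto
    obtain p1 p2 where pp: "is_walk E (V - {v}) u x p1" "is_walk E (V - {v}) x w p2"
      "length p1 + length p2 = Suc (length p)" using walk_split[OF p x] by blast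
    have "dis E V v w \<le> enat (h - s)" using w unfolding nbhd_def by auto
    then obtain r where r: "is_walk E V v w r" "length r \<le> Suc (h - s)"
      by (rule dis_leD)
    have p1V: "is_walk E V u x p1" and p2V: "is_walk E V x w p2"
      using walk_mono[OF pp(1) Diff_subset] walk_mono[OF pp(2) Diff_subset] by auto
    have "\<exists>p'. is_walk E V v x p' \<and> length p' \<le> Suc h"
    proof (cases "length p1 + s \<le> Suc h")
      case True
      have "length (rev q @ tl p1) \<le> Suc h" using walk_app[OF rq p1V] q(2) True by simp
      then show ?thesis using walk_app[OF rq p1V] by blast
    next
      case False
      have "length (r @ tl (rev p2)) \<le> Suc h"
        using walk_app[OF r(1) walk_rev[OF sym p2V]] r(2) pp(3) pl sh False by simp
      then show ?thesis using walk_app[OF r(1) walk_rev[OF sym p2V]] by blast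
    qed
    then have "dis E V v x \<le> enat h" by (blast intro: dis_leI)
    then show "x \<in> N" unfolding N_def nbhd_def using xV by auto
  qed
  have P1: "\<forall>w \<in> nbhd E V v (h - s).
            dis E (V - {v}) u w \<le> enat h \<longleftrightarrow> dis E N u w \<le> enat h"
  proof (intro ballI iffI)
    fix w assume w: "w \<in> nbhd E V v (h - s)" and d: "dis E (V - {v}) u w \<le> enat h"
    obtain p where p: "is_walk E (V - {v}) u w p" "length p \<le> Suc h" by (rule dis_leD[OF d])
    have "is_walk E N u w p" using p(1) key[OF w p] unfolding is_walk_def by auto
    then show "dis E N u w \<le> enat h" using p(2) by (blast intro: dis_leI)
  next
    fix w assume "dis E N u w \<le> enat h"
    then obtain p where p: "is_walk E N u w p" "length p \<le> Suc h" by (rule dis_leD)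
    then show "dis E (V - {v}) u w \<le> enat h" using walk_mono[OF p(1) NV] by (blast intro: dis_leI)
  qed
  define F where "F = {w \<in> nbhd E V v (h - s). dis E (V - {v}) u w > enat h}"
  have P2: "F = {w \<in> nbhd E V v (h - s). dis E N u w > enat h}"
    unfolding F_def using P1 by (auto simp: not_le[symmetric])
  define A where "A = nbhd E (V - {v}) u h"
  define B where "B = nbhd E V u h"
  have finB: "finite B" unfolding B_def nbhd_def using finV by auto
  have vB: "v \<in> B" unfolding B_def nbhd_def using assms(3,5) uv sh by auto
  have FB: "F \<subseteq> B - {v}"
  proof
    fix w assume wF: "w \<in> F"
    then have w: "w \<in> V" "w \<noteq> v" "dis E V v w \<le> enat (h - s)" unfolding F_def nbhd_def by auto
    obtain r where r: "is_walk E V v w r" "length r \<le> Suc (h - s)" by (rule dis_leD[OF w(3)])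
    have "length (q @ tl r) \<le> Suc h" using walk_app[OF q(1) r(1)] q(2) r(2) sh by simp
    then have "dis E V u w \<le> enat h" using walk_app[OF q(1) r(1)] by (blast intro: dis_leI)
    moreover have "w \<noteq> u"
    proof
      assume "w = u"
      have "dis E (V - {v}) u u \<le> enat h" using walk_single[of u "V - {v}" E] uV uv by (intro dis_leI) auto
      with wF \<open>w = u\<close> show False unfolding F_def by auto
    qed
    ultimately show "w \<in> B - {v}" unfolding B_def nbhd_def using w by auto
  qed
  have AB: "A = B - {v} - F"
  proof (intro equalityI subsetI)
    fix y assume y: "y \<in> A"
    then have y1: "y \<in> V" "y \<noteq> v" "y \<noteq> u" "dis E (V - {v}) u y \<le> enat h"
      unfolding A_def nbhd_def by auto
    obtain p where "is_walk E (V - {v}) u y p" "length p \<le> Suc h" by (rule dis_leD[OF y1(4)])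
    then have "dis E V u y \<le> enat h" using walk_mono[of E "V - {v}" u y p V] by (blast intro: dis_leI)
    then show "y \<in> B - {v} - F" using y1 unfolding B_def F_def nbhd_def by auto
  next
    fix y assume y: "y \<in> B - {v} - F"
    then have y1: "y \<in> V" "y \<noteq> v" "y \<noteq> u" "dis E V u y \<le> enat h" "y \<notin> F"
      unfolding B_def nbhd_def by auto
    obtain p where p: "is_walk E V u y p" "length p \<le> Suc h" by (rule dis_leD[OF y1(4)])
    have "dis E (V - {v}) u y \<le> enat h"
    proof (cases "v \<in> set p")
      case False
      then have "is_walk E (V - {v}) u y p" using p(1) unfolding is_walk_def by auto
      then show ?thesis using p(2) by (blast intro: dis_leI)
    next
      case True
      obtain p1 p2 where pp: "is_walk E V u v p1" "is_walk E V v y p2"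
        "length p1 + length p2 = Suc (length p)" using walk_split[OF p(1) True] by blast
      have "length p2 \<le> Suc (h - s)" using qlow[OF pp(1)] pp(3) p(2) sh by simp
      then have "dis E V v y \<le> enat (h - s)" using pp(2) by (blast intro: dis_leI)
      then have "y \<in> nbhd E V v (h - s)" unfolding nbhd_def using y1 by auto
      then show ?thesis using y1(5) unfolding F_def by (auto simp: not_less)
    qed
    then show "y \<in> A" unfolding A_def nbhd_def using y1 by auto
  qed
  have "card A = card (B - {v}) - card F"
    unfolding AB by (rule card_Diff_subset) (use FB finB in \<open>auto intro: finite_subset\<close>)
  moreover have "card (B - {v}) = card B - 1" using vB finB by simp
  moreover have "card F \<le> card (B - {v})" using FB finB by (intro card_mono) auto
  moreover have "card B \<ge> 1" using vB finB by (metis One_nat_def Suc_leI card_gt_0_iff empty_iff)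
  ultimately have "int (card A) = int (card B) - 1 - int (card F)" by linarith
  then show ?thesis using P1 P2
    unfolding A_def B_def hdeg_def N_def F_def by auto
qed

end
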